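(* Consider the iterates $\{x(t)\}$ of the asynchronous network Newton method described in the context, with arbitrary $x(0)\in\mathbb{R}^n$, in a network with $n\ge 2$ agents. If $$0<\varepsilon<\min\left\{1,\;2\left(\frac{\lambda}{\Lambda}\right)^2\right\},$$ then for all $t\ge0$ $$\mathbb{E}\big[F(x(t))-F^*\big]\le(1-\beta)^t\big(F(x(0))-F^*\big),\qquad \beta=\frac{\alpha m\,\varepsilon\,(2\lambda^2-\varepsilon\Lambda^2)}{n\lambda},$$ and $0<\beta<1$.
   Context: Setup. Let $n\ge 1$ be the number of agents and $\alpha>0$ a scalar. $W\in\mathbb{R}^{n\times n}$ is a symmetric nonnegative matrix with $W\mathbb{1}=\mathbb{1}$ (where $\mathbb{1}$ is the all-ones vector), $\mathrm{null}(I-W)=\mathrm{span}\{\mathbb{1}\}$, $0\le W_{ij}<1$ for all $i,j$, and $\delta\le W_{ii}\le\Delta$ for all $i$, for constants $0<\delta\le\Delta<1$. Each $f_i:\mathbb{R}\to\mathbb{R}$ is twice continuously differentiable with $0<m\le f_i''(s)\le M<\infty$ for all $s$ and $|f_i''(a)-f_i''(b)|\le L|a-b|$ for all $a,b$. Define $F(x)=\frac12 x^T(I-W)x+\alpha\sum_{i=1}^n f_i(x_i)$ for $x\in\mathbb{R}^n$, with minimum value $F^*$ and minimizer $x^*$. Let $g(x)=\nabla F(x)$, $G(x)=\mathrm{diag}(f_1''(x_1),\dots,f_n''(x_n))$, $H(x)=\nabla^2F(x)=I-W+\alpha G(x)$. Let $W_d$ be the diagonal matrix with $[W_d]_{ii}=W_{ii}$,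 and set $D(x)=\alpha G(x)+2(I-W_d)$ (diagonal, positive definite) and $B=I-2W_d+W$, so $H(x)=D(x)-B$. Define the approximate Hessian inverse $\hat H(x)^{-1}=D(x)^{-1/2}\big(I+D(x)^{-1/2}BD(x)^{-1/2}\big)D(x)^{-1/2}$. Constants: $\rho=\frac{2(1-\delta)}{2(1-\delta)+\alpha m}$, $\Lambda=\frac{1+\rho}{2(1-\Delta)+\alpha m}$, $\lambda=\frac{1}{2(1-\delta)+\alpha M}$. Algorithm (asynchronous network Newton). Given $x(0)\in\mathbb{R}^n$ and stepsize $\varepsilon>0$, let $\Phi(1),\Phi(2),\dots$ be i.i.d. random diagonal $n\times n$ matrices, each equal to $e_ie_i^T$ (the matrix with a single $1$ in position $(i,i)$ and zeros elsewhere) with probability $1/n$ for each $i=1,\dots,n$ (i.e., one uniformly random agent is active per iteration). The iterates are $x(t)=x(t-1)-\varepsilon\,\Phi(t)\hat H(x(t-1))^{-1}g(x(t-1))$, $t\ge1$. Write $g(t)=g(x(t))$, $D(t)=D(x(t))$, $H(t)=H(x(t))$, $\hat H(t)^{-1}=\hat H(x(t))^{-1}$. $\mathcal{F}_t$ denotes the $\sigma$-field generated by $\Phi(1),\dots,\Phi(t)$ (so $x(t)$ is $\mathcal{F}_t$-measurable). *)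

theory Defs
  imports "HOL-Analysis.Analysis" "HOL-Probability.Probability"
begin

text \<open>Agents are indexed by a finite type 'n (so n = CARD('n)); vectors are real^'n and
  matrices real^'n^'n. The local functions are f i, with first and second derivatives
  f1 i and f2 i.\<close>

definition diagm :: "real^'n \<Rightarrow> real^'n^'n" where
  "diagm v = (\<chi> i j. if i = j then v $ i else 0)"

definition onesv :: "real^'n" where
  "onesv = (\<chi> i. 1)"

definition Fobj :: "real^'n^'n \<Rightarrow> real \<Rightarrow> ('n \<Rightarrow> real \<Rightarrow> real) \<Rightarrow> real^'n \<Rightarrow> real" where
  "Fobj W \<alpha> f x = (1/2) * (x \<bullet> ((mat 1 - W) *v x)) + \<alpha> * (\<Sum>i\<in>UNIV. f i (x $ i))"

definition Fstar :: "real^'n^'n \<Rightarrow> real \<Rightarrow> ('n \<Rightarrow> real \<Rightarrow> real) \<Rightarrow> real" where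
  "Fstar W \<alpha> f = (INF x. Fobj W \<alpha> f x)"

definition gradF :: "real^'n^'n \<Rightarrow> real \<Rightarrow> ('n \<Rightarrow> real \<Rightarrow> real) \<Rightarrow> real^'n \<Rightarrow> real^'n" where
  "gradF W \<alpha> f1 x = (mat 1 - W) *v x + \<alpha> *\<^sub>R (\<chi> i. f1 i (x $ i))"

definition Wdiag :: "real^'n^'n \<Rightarrow> real^'n^'n" where
  "Wdiag W = diagm (\<chi> i. W $ i $ i)"

definition Dvec :: "real^'n^'n \<Rightarrow> real \<Rightarrow> ('n \<Rightarrow> real \<Rightarrow> real) \<Rightarrow> real^'n \<Rightarrow> real^'n" where
  "Dvec W \<alpha> f2 x = (\<chi> i. \<alpha> * f2 i (x $ i) + 2 * (1 - W $ i $ i))"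

definition Dmat :: "real^'n^'n \<Rightarrow> real \<Rightarrow> ('n \<Rightarrow> real \<Rightarrow> real) \<Rightarrow> real^'n \<Rightarrow> real^'n^'n" where
  "Dmat W \<alpha> f2 x = diagm (Dvec W \<alpha> f2 x)"

definition Dinvsqrt :: "real^'n^'n \<Rightarrow> real \<Rightarrow> ('n \<Rightarrow> real \<Rightarrow> real) \<Rightarrow> real^'n \<Rightarrow> real^'n^'n" where
  "Dinvsqrt W \<alpha> f2 x = diagm (\<chi> i. 1 / sqrt (Dvec W \<alpha> f2 x $ i))"

definition Bmat :: "real^'n^'n \<Rightarrow> real^'n^'n" where
  "Bmat W = mat 1 - 2 *\<^sub>R Wdiag W + W"

definition Hhat_inv :: "real^'n^'n \<Rightarrow> real \<Rightarrow> ('n \<Rightarrow> real \<Rightarrow> real) \<Rightarrow> real^'n \<Rightarrow> real^'n^'n" where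
  "Hhat_inv W \<alpha> f2 x =
     Dinvsqrt W \<alpha> f2 x ** (mat 1 + Dinvsqrt W \<alpha> f2 x ** Bmat W ** Dinvsqrt W \<alpha> f2 x)
       ** Dinvsqrt W \<alpha> f2 x"

definition Phi :: "'n \<Rightarrow> real^'n^'n" where
  "Phi i = diagm (\<chi> j. if j = i then 1 else 0)"

definition ann_step :: "real^'n^'n \<Rightarrow> real \<Rightarrow> ('n \<Rightarrow> real \<Rightarrow> real) \<Rightarrow> ('n \<Rightarrow> real \<Rightarrow> real)
    \<Rightarrow> real \<Rightarrow> 'n \<Rightarrow> real^'n \<Rightarrow> real^'n" where
  "ann_step W \<alpha> f1 f2 \<epsilon> i x = x - \<epsilon> *\<^sub>R (Phi i *v (Hhat_inv W \<alpha> f2 x *v gradF W \<alpha> f1 x))"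

text \<open>Distribution of x(t): Phi(1), Phi(2), ... i.i.d., each e_i e_i^T with probability 1/n.\<close>
primrec ann_dist :: "real^'n^'n \<Rightarrow> real \<Rightarrow> ('n::finite \<Rightarrow> real \<Rightarrow> real) \<Rightarrow> ('n \<Rightarrow> real \<Rightarrow> real)
    \<Rightarrow> real \<Rightarrow> real^'n \<Rightarrow> nat \<Rightarrow> (real^'n) pmf" where
  "ann_dist W \<alpha> f1 f2 \<epsilon> x0 0 = return_pmf x0"
| "ann_dist W \<alpha> f1 f2 \<epsilon> x0 (Suc t) =
     bind_pmf (ann_dist W \<alpha> f1 f2 \<epsilon> x0 t)
       (\<lambda>x. map_pmf (\<lambda>i. ann_step W \<alpha> f1 f2 \<epsilon> i x) (pmf_of_set UNIV))"

definition rho_c :: "real \<Rightarrow> real \<Rightarrow> real \<Rightarrow> real" where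
  "rho_c \<delta> \<alpha> m = 2 * (1 - \<delta>) / (2 * (1 - \<delta>) + \<alpha> * m)"

definition Lambda_c :: "real \<Rightarrow> real \<Rightarrow> real \<Rightarrow> real \<Rightarrow> real" where
  "Lambda_c \<delta> \<Delta> \<alpha> m = (1 + rho_c \<delta> \<alpha> m) / (2 * (1 - \<Delta>) + \<alpha> * m)"

definition lambda_c :: "real \<Rightarrow> real \<Rightarrow> real \<Rightarrow> real" where
  "lambda_c \<delta> \<alpha> M = 1 / (2 * (1 - \<delta>) + \<alpha> * M)"

end

theory Submission
  imports Defs
begin


lemma taylor2:
  fixes f f1 f2 :: "real \<Rightarrow> real"
  assumes d1: "\<And>s. (f has_real_derivative f1 s) (at s)"
    and d2: "\<And>s. (f1 has_real_derivative f2 s) (at s)"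
    and bd: "\<And>s. m \<le> f2 s \<and> f2 s \<le> M"
  shows "f x + f1 x * (y-x) + m/2*(y-x)^2 \<le> f y \<and> f y \<le> f x + f1 x*(y-x) + M/2*(y-x)^2"
proof (cases "y = x")
  case True then show ?thesis by simp
next
  case False
  define diff where "diff = (\<lambda>k::nat. if k = 0 then f else if k = 1 then f1 else f2)"
  have "\<exists>t. (if y < x then y < t \<and> t < x else x < t \<and> t < y) \<and>
    f y = (\<Sum>k<2. (diff k x / fact k) * (y - x)^k) + (diff 2 t / fact 2) * (y - x)^2"
    apply (rule Taylor[of 2 diff f "min x y" "max x y"])
    using d1 d2 False by (auto simp: diff_def less_2_cases_iff)
  then obtain t where "f y = (\<Sum>k<2. (diff k x / fact k) * (y - x)^k) + (diff 2 t / fact 2) * (y - x)^2"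
    by blast
  then have e: "f y = f x + f1 x * (y-x) + f2 t / 2 * (y-x)^2"
    by (simp add: diff_def numeral_2_eq_2)
  have "0 \<le> (y-x)^2" by simp
  from bd[of t] this show ?thesis unfolding e
    by (auto intro: mult_right_mono)
qed



lemma qf_sum: "(z::real^'n) \<bullet> (A *v z) = (\<Sum>i\<in>UNIV. \<Sum>j\<in>UNIV. z$i * A$i$j * z$j)"
  by (simp add: inner_vec_def matrix_vector_mult_def sum_distrib_left mult.assoc)

lemma sym_inner: assumes "transpose A = (A::real^'n^'n)"
  shows "x \<bullet> (A *v y) = (A *v x) \<bullet> y"
proof -
  have "x \<bullet> (A *v y) = (x v* A) \<bullet> y" by (simp add: dot_lmul_matrix)
  also have "\<dots> = (transpose A *v x) \<bullet> y" by simp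
  finally show ?thesis using assms by simp
qed

lemma double_sums:
  fixes W :: "real^'n^'n" and z :: "real^'n"
  assumes sym: "\<And>i j. W$i$j = W$j$i" and rows: "\<And>i. (\<Sum>j\<in>UNIV. W$i$j) = 1"
  shows "(\<Sum>i\<in>UNIV. \<Sum>j\<in>UNIV. W$i$j * (z$i)^2) = (\<Sum>i\<in>UNIV. (z$i)^2)"
    and "(\<Sum>i\<in>UNIV. \<Sum>j\<in>UNIV. W$i$j * (z$j)^2) = (\<Sum>i\<in>UNIV. (z$i)^2)"
proof -
  show "(\<Sum>i\<in>UNIV. \<Sum>j\<in>UNIV. W$i$j * (z$i)^2) = (\<Sum>i\<in>UNIV. (z$i)^2)"
    by (simp add: sum_distrib_right[symmetric] rows)
  have "(\<Sum>i\<in>UNIV. \<Sum>j\<in>UNIV. W$i$j * (z$j)^2) = (\<Sum>j\<in>UNIV. \<Sum>i\<in>UNIV. W$j$i * (z$j)^2)"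
    by (subst sum.swap) (simp add: sym)
  also have "\<dots> = (\<Sum>i\<in>UNIV. (z$i)^2)"
    by (simp add: sum_distrib_right[symmetric] rows)
  finally show "(\<Sum>i\<in>UNIV. \<Sum>j\<in>UNIV. W$i$j * (z$j)^2) = (\<Sum>i\<in>UNIV. (z$i)^2)" .
qed

lemma qf_lower:
  fixes W A :: "real^'n^'n" and z :: "real^'n"
  assumes sym: "\<And>i j. W$i$j = W$j$i" and rows: "\<And>i. (\<Sum>j\<in>UNIV. W$i$j) = 1"
    and t: "\<And>i j. (if i=j then (z$i)^2 else 0) - W$i$j*((z$i)^2+(z$j)^2)/2 \<le> z$i*A$i$j*z$j"
  shows "0 \<le> z \<bullet> (A *v z)"
proof -
  have "(\<Sum>i\<in>UNIV. \<Sum>j\<in>UNIV. (if i=j then (z$i)^2 else 0) - W$i$j*((z$i)^2+(z$j)^2)/2)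
     = (\<Sum>i\<in>UNIV. (z$i)^2) - (\<Sum>i\<in>UNIV. \<Sum>j\<in>UNIV. W$i$j * (z$i)^2)/2
        - (\<Sum>i\<in>UNIV. \<Sum>j\<in>UNIV. W$i$j * (z$j)^2)/2"
    by (simp add: sum_subtractf sum.distrib sum_divide_distrib distrib_left add_divide_distrib)
  also have "\<dots> = 0" using double_sums[OF sym rows] by simp
  finally have e: "(\<Sum>i\<in>UNIV. \<Sum>j\<in>UNIV. (if i=j then (z$i)^2 else 0) - W$i$j*((z$i)^2+(z$j)^2)/2) = 0" .
  have "(\<Sum>i\<in>UNIV. \<Sum>j\<in>UNIV. (if i=j then (z$i)^2 else 0) - W$i$j*((z$i)^2+(z$j)^2)/2)
      \<le> (\<Sum>i\<in>UNIV. \<Sum>j\<in>UNIV. z$i * A$i$j * z$j)"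
    by (intro sum_mono t)
  then show ?thesis using e by (simp add: qf_sum)
qed

lemma qf_upper:
  fixes W A :: "real^'n^'n" and z :: "real^'n"
  assumes sym: "\<And>i j. W$i$j = W$j$i" and rows: "\<And>i. (\<Sum>j\<in>UNIV. W$i$j) = 1"
    and t: "\<And>i j. z$i*A$i$j*z$j \<le> (if i=j then (1 - 2*W$i$i)*(z$i)^2 else 0) + W$i$j*((z$i)^2+(z$j)^2)/2"
  shows "z \<bullet> (A *v z) \<le> (\<Sum>i\<in>UNIV. 2*(1 - W$i$i)*(z$i)^2)"
proof -
  have "(\<Sum>i\<in>UNIV. \<Sum>j\<in>UNIV. (if i=j then (1 - 2*W$i$i)*(z$i)^2 else 0) + W$i$j*((z$i)^2+(z$j)^2)/2)
     = (\<Sum>i\<in>UNIV. (1 - 2*W$i$i)*(z$i)^2) + (\<Sum>i\<in>UNIV. \<Sum>j\<in>UNIV. W$i$j * (z$i)^2)/2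
        + (\<Sum>i\<in>UNIV. \<Sum>j\<in>UNIV. W$i$j * (z$j)^2)/2"
    by (simp add: sum.distrib sum_divide_distrib distrib_left add_divide_distrib)
  also have "\<dots> = (\<Sum>i\<in>UNIV. (1 - 2*W$i$i)*(z$i)^2) + (\<Sum>i\<in>UNIV. (z$i)^2)"
    using double_sums[OF sym rows] by simp
  also have "\<dots> = (\<Sum>i\<in>UNIV. (1 - 2*W$i$i)*(z$i)^2 + (z$i)^2)" by (simp add: sum.distrib)
  also have "\<dots> = (\<Sum>i\<in>UNIV. 2*(1 - W$i$i)*(z$i)^2)" by (rule sum.cong) (auto simp: algebra_simps)
  finally have e: "(\<Sum>i\<in>UNIV. \<Sum>j\<in>UNIV. (if i=j then (1 - 2*W$i$i)*(z$i)^2 else 0) + W$i$j*((z$i)^2+(z$j)^2)/2) = (\<Sum>i\<in>UNIV. 2*(1 - W$i$i)*(z$i)^2)" .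
  have "(\<Sum>i\<in>UNIV. \<Sum>j\<in>UNIV. z$i * A$i$j * z$j) \<le> (\<Sum>i\<in>UNIV. \<Sum>j\<in>UNIV. (if i=j then (1 - 2*W$i$i)*(z$i)^2 else 0) + W$i$j*((z$i)^2+(z$j)^2)/2)"
    by (intro sum_mono t)
  then show ?thesis using e by (simp add: qf_sum)
qed

lemma amgm2: "(a::real)*b \<le> (a^2+b^2)/2" "-(a^2+b^2)/2 \<le> a*b"
  using sum_squares_ge_zero[of "a-b" 0] sum_squares_ge_zero[of "a+b" 0]
  by (auto simp: power2_eq_square algebra_simps)

lemma Q_entry: "(mat 1 - W) $ i $ j = (if i = j then 1 else 0) - W$i$j"
  by (simp add: mat_def)

lemma B_entry: "Bmat W $ i $ j = (if i = j then 1 - W$i$i else W$i$j)"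
  by (simp add: Bmat_def Wdiag_def diagm_def mat_def)

lemma Q_nonneg:
  fixes W :: "real^'n^'n" and z :: "real^'n"
  assumes sym: "\<And>i j. W$i$j = W$j$i" and rows: "\<And>i. (\<Sum>j\<in>UNIV. W$i$j) = 1"
    and nn: "\<And>i j. 0 \<le> W$i$j"
  shows "0 \<le> z \<bullet> ((mat 1 - W) *v z)"
proof (rule qf_lower[OF sym rows])
  fix i j
  show "(if i=j then (z$i)^2 else 0) - W$i$j*((z$i)^2+(z$j)^2)/2 \<le> z$i*(mat 1 - W)$i$j*z$j"
  proof (cases "i = j")
    case True then show ?thesis by (simp add: mat_def power2_eq_square algebra_simps)
  next
    case False
    have "W$i$j * (z$i*z$j) \<le> W$i$j*(((z$i)^2+(z$j)^2)/2)" by (intro mult_left_mono amgm2 nn)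
    then show ?thesis using False by (simp add: mat_def algebra_simps)
  qed
qed

lemma B_nonneg:
  fixes W :: "real^'n^'n" and z :: "real^'n"
  assumes sym: "\<And>i j. W$i$j = W$j$i" and rows: "\<And>i. (\<Sum>j\<in>UNIV. W$i$j) = 1"
    and nn: "\<And>i j. 0 \<le> W$i$j"
  shows "0 \<le> z \<bullet> (Bmat W *v z)"
proof (rule qf_lower[OF sym rows])
  fix i j
  show "(if i=j then (z$i)^2 else 0) - W$i$j*((z$i)^2+(z$j)^2)/2 \<le> z$i*Bmat W$i$j*z$j"
  proof (cases "i = j")
    case True then show ?thesis by (simp add: B_entry power2_eq_square algebra_simps)
  next
    case False
    have "W$i$j*(-((z$i)^2+(z$j)^2)/2) \<le> W$i$j * (z$i*z$j)" by (intro mult_left_mono amgm2 nn)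
    then show ?thesis using False by (simp add: B_entry algebra_simps add_divide_distrib)
  qed
qed

lemma B_upper:
  fixes W :: "real^'n^'n" and z :: "real^'n"
  assumes sym: "\<And>i j. W$i$j = W$j$i" and rows: "\<And>i. (\<Sum>j\<in>UNIV. W$i$j) = 1"
    and nn: "\<And>i j. 0 \<le> W$i$j"
  shows "z \<bullet> (Bmat W *v z) \<le> (\<Sum>i\<in>UNIV. 2*(1 - W$i$i)*(z$i)^2)"
proof (rule qf_upper[OF sym rows])
  fix i j
  show "z$i*Bmat W$i$j*z$j \<le> (if i=j then (1 - 2*W$i$i)*(z$i)^2 else 0) + W$i$j*((z$i)^2+(z$j)^2)/2"
  proof (cases "i = j")
    case True then show ?thesis by (simp add: B_entry power2_eq_square algebra_simps)
  next
    case False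
    have "W$i$j * (z$i*z$j) \<le> W$i$j*(((z$i)^2+(z$j)^2)/2)" by (intro mult_left_mono amgm2 nn)
    then show ?thesis using False by (simp add: B_entry algebra_simps)
  qed
qed



lemma diagm_vec: "diagm p *v v = (\<chi> i. p$i * v$i)"
  by (simp add: diagm_def matrix_vector_mult_def vec_eq_iff if_distrib if_distribR cong: if_cong)

lemma diagm_transpose[simp]: "transpose (diagm p) = diagm p"
  by (simp add: diagm_def transpose_def vec_eq_iff)

lemma sym_entry: "transpose W = W \<Longrightarrow> W$i$j = W$j$i"
  by (metis transpose_def vec_lambda_beta)

lemma transpose_add': "transpose (A + B) = transpose A + transpose (B::real^'n^'n)"
  by (simp add: transpose_def vec_eq_iff)

lemma Bmat_transpose: "transpose W = W \<Longrightarrow> transpose (Bmat W) = Bmat W"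
  by (auto simp: vec_eq_iff transpose_def B_entry dest: sym_entry)

lemma hform:
  fixes d v :: "real^'n" and B :: "real^'n^'n"
  assumes pos: "\<And>i. d$i > 0" and Bs: "transpose B = B"
  defines "P \<equiv> diagm (\<chi> i. 1 / sqrt (d$i))"
  shows "v \<bullet> ((P ** (mat 1 + P ** B ** P) ** P) *v v)
          = (\<Sum>i\<in>UNIV. (v$i)^2 / d$i) + (\<chi> i. v$i/d$i) \<bullet> (B *v (\<chi> i. v$i/d$i))"
    and "transpose (P ** (mat 1 + P ** B ** P) ** P) = P ** (mat 1 + P ** B ** P) ** P"
proof -
  have Pt: "transpose P = P" by (simp add: P_def)
  define w where "w = P *v v"
  have Pw: "P *v w = (\<chi> i. v$i/d$i)"
    using pos by (simp add: w_def P_def diagm_vec vec_eq_iff real_sqrt_mult[symmetric] order.strict_implies_order)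
  have ww: "w \<bullet> w = (\<Sum>i\<in>UNIV. (v$i)^2 / d$i)"
    using pos by (simp add: w_def P_def diagm_vec inner_vec_def power2_eq_square real_sqrt_mult[symmetric] order.strict_implies_order)
  have "v \<bullet> ((P ** (mat 1 + P ** B ** P) ** P) *v v) = v \<bullet> (P *v ((mat 1 + P ** B ** P) *v w))"
    by (simp add: w_def matrix_vector_mul_assoc matrix_mul_assoc)
  also have "\<dots> = w \<bullet> ((mat 1 + P ** B ** P) *v w)"
    using sym_inner[OF Pt] by (simp add: w_def)
  also have "\<dots> = w \<bullet> w + w \<bullet> (P *v (B *v (P *v w)))"
    by (simp add: matrix_vector_mult_add_rdistrib inner_add_right matrix_vector_mul_assoc matrix_mul_assoc)
  also have "\<dots> = w \<bullet> w + (P *v w) \<bullet> (B *v (P *v w))"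
    using sym_inner[OF Pt] by simp
  finally show "v \<bullet> ((P ** (mat 1 + P ** B ** P) ** P) *v v)
          = (\<Sum>i\<in>UNIV. (v$i)^2 / d$i) + (\<chi> i. v$i/d$i) \<bullet> (B *v (\<chi> i. v$i/d$i))"
    by (simp add: Pw ww)
  show "transpose (P ** (mat 1 + P ** B ** P) ** P) = P ** (mat 1 + P ** B ** P) ** P"
    by (simp add: matrix_transpose_mul transpose_add' Pt Bs matrix_mul_assoc)
qed

lemma norm_from_qf:
  fixes A :: "real^'n^'n"
  assumes sym: "transpose A = A" and nn: "\<And>v. 0 \<le> v \<bullet> (A *v v)"
    and ub: "\<And>v. v \<bullet> (A *v v) \<le> c * (v \<bullet> v)"
  shows "(A *v v) \<bullet> (A *v v) \<le> c^2 * (v \<bullet> v)"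
proof -
  define u where "u = A *v v"
  define a where "a = u \<bullet> (A *v u)"
  define b where "b = u \<bullet> (A *v v)"
  define e where "e = v \<bullet> (A *v v)"
  have q: "0 \<le> a + 2*t*b + t^2*e" for t
  proof -
    have "0 \<le> (u + t *\<^sub>R v) \<bullet> (A *v (u + t *\<^sub>R v))" by (rule nn)
    also have "\<dots> = a + t * (u \<bullet> (A *v v)) + t * (v \<bullet> (A *v u)) + t^2 * e"
      by (simp add: a_def e_def matrix_vector_right_distrib matrix_vector_mult_scaleR inner_add_left inner_add_right power2_eq_square algebra_simps)
    also have "v \<bullet> (A *v u) = b" using sym_inner[OF sym, of v u] sym_inner[OF sym, of u v]
      by (simp add: b_def inner_commute)
    finally show ?thesis by (simp add: b_def)
  qed
  have cs: "b^2 \<le> a * e"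
  proof (cases "e = 0")
    case True
    have "b = 0"
    proof (rule ccontr)
      assume "b \<noteq> 0"
      from q[of "-(a+1)/(2*b)"] True \<open>b \<noteq> 0\<close> show False
        by (simp add: field_simps)
    qed
    then show ?thesis using True by simp
  next
    case False
    then have epos: "e > 0" using nn[of v] e_def by simp
    from q[of "-b/e"] have "0 \<le> a - b^2/e" using epos
      by (simp add: field_simps power2_eq_square)
    then show ?thesis using epos by (simp add: field_simps)
  qed
  have uu: "u \<bullet> u = b" unfolding b_def u_def by simp
  have a_le: "a \<le> c * (u \<bullet> u)" unfolding a_def by (rule ub)
  have e_le: "e \<le> c * (v \<bullet> v)" unfolding e_def by (rule ub)
  have a0: "0 \<le> a" unfolding a_def by (rule nn)
  have e0: "0 \<le> e" unfolding e_def by (rule nn)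
  have "(u \<bullet> u)^2 \<le> (c * (u \<bullet> u)) * (c * (v \<bullet> v))"
    using cs uu mult_mono[OF a_le e_le] a0 e0 a_le by (smt (verit) mult_nonneg_nonneg)
  then have "(u \<bullet> u) * (u \<bullet> u) \<le> (u \<bullet> u) * (c^2 * (v \<bullet> v))"
    by (simp add: power2_eq_square mult_ac)
  moreover have "0 \<le> u \<bullet> u" by simp
  ultimately show ?thesis unfolding u_def[symmetric]
    by (cases "u \<bullet> u = 0") (auto simp: mult_le_cancel_left)
qed



lemma scalar_upper:
  fixes a c am Dl dl :: real
  assumes am: "0 < am" "am \<le> c" and a: "Dl \<le> a" "a \<le> dl" and Dl: "0 < Dl"
  shows "1/(c+a) + a/(c+a)^2 \<le> (1 + dl/(dl + am)) / (Dl + am)"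
proof -
  have h1: "1/(c+a) \<le> 1/(Dl+am)" using am a Dl by (intro divide_left_mono) auto
  have h2: "a/(c+a) \<le> dl/(dl+am)"
  proof -
    have "a*am \<le> dl*c" using am a Dl by (intro mult_mono) auto
    then have "a*(dl+am) \<le> dl*(c+a)" by (simp add: algebra_simps)
    then show ?thesis using am a Dl by (simp add: divide_simps)
  qed
  have ca: "c + a \<noteq> 0" using am a Dl by linarith
  have e: "1/(c+a) + a/(c+a)^2 = (1/(c+a)) * (1 + a/(c+a))"
  proof -
    have "a/(c+a)^2 = (1/(c+a)) * (a/(c+a))" by (simp add: power2_eq_square)
    then show ?thesis by (simp add: distrib_left)
  qed
  have "(1/(c+a)) * (1 + a/(c+a)) \<le> (1/(Dl+am)) * (1 + dl/(dl+am))"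
    using h1 h2 am a Dl by (intro mult_mono) auto
  then show ?thesis using e by simp
qed

lemma inner_self_sum: "(v::real^'n) \<bullet> v = (\<Sum>i\<in>UNIV. (v$i)^2)"
  by (simp add: inner_vec_def power2_eq_square)

lemma hhat_props:
  fixes W :: "real^'n::finite^'n" and x :: "real^'n" and f2 :: "'n \<Rightarrow> real \<Rightarrow> real"
  assumes Wsym: "transpose W = W"
    and Wnonneg: "\<And>i j. 0 \<le> W $ i $ j"
    and rows: "\<And>i. (\<Sum>j\<in>UNIV. W$i$j) = 1"
    and delta: "0 < \<delta>" "\<delta> \<le> \<Delta>" "\<Delta> < 1"
    and Wdiag_bd: "\<And>i. \<delta> \<le> W $ i $ i \<and> W $ i $ i \<le> \<Delta>"
    and alpha: "\<alpha> > 0" and mM: "0 < m" "m \<le> M"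
    and f2_bd: "\<And>i s. m \<le> f2 i s \<and> f2 i s \<le> M"
  shows "transpose (Hhat_inv W \<alpha> f2 x) = Hhat_inv W \<alpha> f2 x"
    and "lambda_c \<delta> \<alpha> M * (v \<bullet> v) \<le> v \<bullet> (Hhat_inv W \<alpha> f2 x *v v)"
    and "v \<bullet> (Hhat_inv W \<alpha> f2 x *v v) \<le> Lambda_c \<delta> \<Delta> \<alpha> m * (v \<bullet> v)"
    and "(Hhat_inv W \<alpha> f2 x *v v) \<bullet> (Hhat_inv W \<alpha> f2 x *v v) \<le> (Lambda_c \<delta> \<Delta> \<alpha> m)^2 * (v \<bullet> v)"
proof -
  define d where "d = Dvec W \<alpha> f2 x"
  have dform: "d$i = \<alpha> * f2 i (x$i) + 2*(1 - W$i$i)" for i by (simp add: d_def Dvec_def)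
  have c_bd: "\<alpha>*m \<le> \<alpha> * f2 i (x$i)" "\<alpha> * f2 i (x$i) \<le> \<alpha>*M" for i
    using f2_bd[of i "x$i"] alpha by auto
  have am: "0 < \<alpha>*m" using alpha mM by simp
  have dpos: "d$i > 0" for i
  proof -
    have "0 < \<alpha> * f2 i (x$i)" using c_bd(1)[of i] am by linarith
    moreover have "0 \<le> 1 - W$i$i" using Wdiag_bd[of i] delta by linarith
    ultimately show ?thesis unfolding dform by (intro add_pos_nonneg) auto
  qed
  have sym: "\<And>i j. W$i$j = W$j$i" using Wsym by (rule sym_entry)
  have Bs: "transpose (Bmat W) = Bmat W" using Wsym by (rule Bmat_transpose)
  have H: "Hhat_inv W \<alpha> f2 x = diagm (\<chi> i. 1 / sqrt (d$i)) ** (mat 1 + diagm (\<chi> i. 1 / sqrt (d$i)) ** Bmat W ** diagm (\<chi> i. 1 / sqrt (d$i))) ** diagm (\<chi> i. 1 / sqrt (d$i))"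
    by (simp add: Hhat_inv_def Dinvsqrt_def d_def)
  note hf = hform[OF dpos Bs]
  show ts: "transpose (Hhat_inv W \<alpha> f2 x) = Hhat_inv W \<alpha> f2 x" unfolding H by (rule hf(2))
  have qf: "u \<bullet> (Hhat_inv W \<alpha> f2 x *v u) = (\<Sum>i\<in>UNIV. (u$i)^2 / d$i) + (\<chi> i. u$i/d$i) \<bullet> (Bmat W *v (\<chi> i. u$i/d$i))" for u
    unfolding H by (rule hf(1))
  have lo: "lambda_c \<delta> \<alpha> M * (u \<bullet> u) \<le> u \<bullet> (Hhat_inv W \<alpha> f2 x *v u)" for u
  proof -
    have "lambda_c \<delta> \<alpha> M * (u \<bullet> u) = (\<Sum>i\<in>UNIV. lambda_c \<delta> \<alpha> M * (u$i)^2)"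
      by (simp add: inner_self_sum sum_distrib_left)
    also have "\<dots> \<le> (\<Sum>i\<in>UNIV. (u$i)^2 / d$i)"
    proof (rule sum_mono)
      fix i
      have "d$i \<le> 2*(1-\<delta>) + \<alpha>*M" using dform[of i] c_bd[of i] Wdiag_bd[of i] by simp
      then have "1/(2*(1-\<delta>) + \<alpha>*M) \<le> 1/d$i" using dpos[of i] by (intro divide_left_mono) auto
      then have "lambda_c \<delta> \<alpha> M * (u$i)^2 \<le> 1/d$i * (u$i)^2"
        by (intro mult_right_mono) (auto simp: lambda_c_def)
      then show "lambda_c \<delta> \<alpha> M * (u$i)^2 \<le> (u$i)^2 / d$i" by simp
    qed
    also have "\<dots> \<le> u \<bullet> (Hhat_inv W \<alpha> f2 x *v u)"
      using qf[of u] B_nonneg[OF sym rows Wnonneg] by simp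
    finally show ?thesis .
  qed
  show "lambda_c \<delta> \<alpha> M * (v \<bullet> v) \<le> v \<bullet> (Hhat_inv W \<alpha> f2 x *v v)" by (rule lo)
  have up: "u \<bullet> (Hhat_inv W \<alpha> f2 x *v u) \<le> Lambda_c \<delta> \<Delta> \<alpha> m * (u \<bullet> u)" for u
  proof -
    have "u \<bullet> (Hhat_inv W \<alpha> f2 x *v u) \<le> (\<Sum>i\<in>UNIV. (u$i)^2 / d$i) + (\<Sum>i\<in>UNIV. 2*(1 - W$i$i)*((\<chi> i. u$i/d$i)$i)^2)"
      using qf[of u] B_upper[OF sym rows Wnonneg, of "\<chi> i. u$i/d$i"] by simp
    also have "\<dots> = (\<Sum>i\<in>UNIV. (u$i)^2 * (1/d$i + 2*(1 - W$i$i)/(d$i)^2))"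
      by (simp add: sum.distrib[symmetric] power_divide field_simps)
    also have "\<dots> \<le> (\<Sum>i\<in>UNIV. (u$i)^2 * Lambda_c \<delta> \<Delta> \<alpha> m)"
    proof (rule sum_mono)
      fix i
      have "1/(\<alpha> * f2 i (x$i) + 2*(1 - W$i$i)) + 2*(1 - W$i$i)/(\<alpha> * f2 i (x$i) + 2*(1 - W$i$i))^2
          \<le> (1 + 2*(1-\<delta>)/(2*(1-\<delta>) + \<alpha>*m)) / (2*(1-\<Delta>) + \<alpha>*m)"
        using Wdiag_bd[of i] delta c_bd[of i] am by (intro scalar_upper) auto
      then have "1/d$i + 2*(1 - W$i$i)/(d$i)^2 \<le> Lambda_c \<delta> \<Delta> \<alpha> m"
        by (simp add: dform Lambda_c_def rho_c_def)
      then show "(u$i)^2 * (1/d$i + 2*(1 - W$i$i)/(d$i)^2) \<le> (u$i)^2 * Lambda_c \<delta> \<Delta> \<alpha> m"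
        by (intro mult_left_mono) auto
    qed
    also have "\<dots> = Lambda_c \<delta> \<Delta> \<alpha> m * (u \<bullet> u)"
      by (simp add: inner_self_sum sum_distrib_left mult_ac)
    finally show ?thesis .
  qed
  show "v \<bullet> (Hhat_inv W \<alpha> f2 x *v v) \<le> Lambda_c \<delta> \<Delta> \<alpha> m * (v \<bullet> v)" by (rule up)
  have lpos: "0 \<le> lambda_c \<delta> \<alpha> M"
  proof -
    have "0 \<le> 2*(1-\<delta>) + \<alpha>*M" using delta am mM alpha
      by (smt (verit) mult_left_mono)
    then show ?thesis by (simp add: lambda_c_def)
  qed
  have nn: "0 \<le> u \<bullet> (Hhat_inv W \<alpha> f2 x *v u)" for u
    using lo[of u] mult_nonneg_nonneg[OF lpos inner_ge_zero[of u]] by linarith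
  show "(Hhat_inv W \<alpha> f2 x *v v) \<bullet> (Hhat_inv W \<alpha> f2 x *v v) \<le> (Lambda_c \<delta> \<Delta> \<alpha> m)^2 * (v \<bullet> v)"
    by (rule norm_from_qf[OF ts nn up])
qed



lemma Q_transpose: "transpose W = W \<Longrightarrow> transpose (mat 1 - W) = (mat 1 - (W::real^'n^'n))"
  by (auto simp: vec_eq_iff transpose_def mat_def dest: sym_entry)

lemma F_taylor:
  fixes W :: "real^'n::finite^'n" and x h :: "real^'n"
  assumes Wsym: "transpose W = W" and alpha: "\<alpha> > 0"
    and f_deriv: "\<And>i s. (f i has_real_derivative f1 i s) (at s)"
    and f1_deriv: "\<And>i s. (f1 i has_real_derivative f2 i s) (at s)"
    and f2_bd: "\<And>i s. m \<le> f2 i s \<and> f2 i s \<le> M"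
  shows "Fobj W \<alpha> f (x + h) \<le> Fobj W \<alpha> f x + gradF W \<alpha> f1 x \<bullet> h + (1/2) * (h \<bullet> ((mat 1 - W) *v h)) + \<alpha>*M/2 * (h \<bullet> h)"
    and "Fobj W \<alpha> f x + gradF W \<alpha> f1 x \<bullet> h + (1/2) * (h \<bullet> ((mat 1 - W) *v h)) + \<alpha>*m/2 * (h \<bullet> h) \<le> Fobj W \<alpha> f (x + h)"
proof -
  let ?Q = "mat 1 - W"
  have quad: "(x+h) \<bullet> (?Q *v (x+h)) = x \<bullet> (?Q *v x) + 2 * ((?Q *v x) \<bullet> h) + h \<bullet> (?Q *v h)"
  proof -
    have "(x+h) \<bullet> (?Q *v (x+h)) = x \<bullet> (?Q *v x) + x \<bullet> (?Q *v h) + h \<bullet> (?Q *v x) + h \<bullet> (?Q *v h)"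
      by (simp add: matrix_vector_right_distrib inner_add_left inner_add_right)
    moreover have "x \<bullet> (?Q *v h) = (?Q *v x) \<bullet> h" by (rule sym_inner[OF Q_transpose[OF Wsym]])
    ultimately show ?thesis by (simp add: inner_commute)
  qed
  have gh: "gradF W \<alpha> f1 x \<bullet> h = (?Q *v x) \<bullet> h + \<alpha> * (\<Sum>i\<in>UNIV. f1 i (x$i) * h$i)"
    unfolding gradF_def inner_add_left inner_scaleR_left by (simp add: inner_vec_def sum_distrib_left mult_ac)
  have hh: "h \<bullet> h = (\<Sum>i\<in>UNIV. (h$i)^2)" by (rule inner_self_sum)
  have T: "f i (x$i) + f1 i (x$i) * h$i + m/2*(h$i)^2 \<le> f i ((x+h)$i) \<and> f i ((x+h)$i) \<le> f i (x$i) + f1 i (x$i) * h$i + M/2*(h$i)^2" for i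
    using taylor2[of "f i" "f1 i" "f2 i" m M "x$i" "x$i + h$i", OF f_deriv f1_deriv f2_bd] by simp
  have su: "(\<Sum>i\<in>UNIV. f i ((x+h)$i)) \<le> (\<Sum>i\<in>UNIV. f i (x$i)) + (\<Sum>i\<in>UNIV. f1 i (x$i) * h$i) + M/2 * (\<Sum>i\<in>UNIV. (h$i)^2)"
  proof -
    have "(\<Sum>i\<in>UNIV. f i ((x+h)$i)) \<le> (\<Sum>i\<in>UNIV. f i (x$i) + f1 i (x$i) * h$i + M/2*(h$i)^2)"
      by (rule sum_mono) (use T in blast)
    then show ?thesis by (simp add: sum.distrib sum_distrib_left)
  qed
  have sl: "(\<Sum>i\<in>UNIV. f i (x$i)) + (\<Sum>i\<in>UNIV. f1 i (x$i) * h$i) + m/2 * (\<Sum>i\<in>UNIV. (h$i)^2) \<le> (\<Sum>i\<in>UNIV. f i ((x+h)$i))"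
  proof -
    have "(\<Sum>i\<in>UNIV. f i (x$i) + f1 i (x$i) * h$i + m/2*(h$i)^2) \<le> (\<Sum>i\<in>UNIV. f i ((x+h)$i))"
      by (rule sum_mono) (use T in blast)
    then show ?thesis by (simp add: sum.distrib sum_distrib_left)
  qed
  show "Fobj W \<alpha> f (x + h) \<le> Fobj W \<alpha> f x + gradF W \<alpha> f1 x \<bullet> h + (1/2) * (h \<bullet> ((mat 1 - W) *v h)) + \<alpha>*M/2 * (h \<bullet> h)"
    using mult_left_mono[OF su less_imp_le[OF alpha]] unfolding Fobj_def quad gh hh
    by (simp add: algebra_simps)
  show "Fobj W \<alpha> f x + gradF W \<alpha> f1 x \<bullet> h + (1/2) * (h \<bullet> ((mat 1 - W) *v h)) + \<alpha>*m/2 * (h \<bullet> h) \<le> Fobj W \<alpha> f (x + h)"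
    using mult_left_mono[OF sl less_imp_le[OF alpha]] unfolding Fobj_def quad gh hh
    by (simp add: algebra_simps)
qed



lemma F_PL:
  fixes W :: "real^'n::finite^'n" and x :: "real^'n"
  assumes Wsym: "transpose W = W" and alpha: "\<alpha> > 0" and m0: "0 < m"
    and Wnonneg: "\<And>i j. 0 \<le> W $ i $ j"
    and rows: "\<And>i. (\<Sum>j\<in>UNIV. W$i$j) = 1"
    and f_deriv: "\<And>i s. (f i has_real_derivative f1 i s) (at s)"
    and f1_deriv: "\<And>i s. (f1 i has_real_derivative f2 i s) (at s)"
    and f2_bd: "\<And>i s. m \<le> f2 i s \<and> f2 i s \<le> M"
  shows "Fobj W \<alpha> f x - gradF W \<alpha> f1 x \<bullet> gradF W \<alpha> f1 x / (2*\<alpha>*m) \<le> Fobj W \<alpha> f y"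
    and "Fstar W \<alpha> f \<le> Fobj W \<alpha> f y"
    and "Fobj W \<alpha> f x - Fstar W \<alpha> f \<le> gradF W \<alpha> f1 x \<bullet> gradF W \<alpha> f1 x / (2*\<alpha>*m)"
proof -
  have sym: "\<And>i j. W$i$j = W$j$i" using Wsym by (rule sym_entry)
  have am: "0 < \<alpha> * m" using alpha m0 by simp
  have lb: "Fobj W \<alpha> f x - gradF W \<alpha> f1 x \<bullet> gradF W \<alpha> f1 x / (2*\<alpha>*m) \<le> Fobj W \<alpha> f y" for x y
  proof -
    define g where "g = gradF W \<alpha> f1 x"
    define h where "h = y - x"
    have "Fobj W \<alpha> f x + g \<bullet> h + (1/2) * (h \<bullet> ((mat 1 - W) *v h)) + \<alpha>*m/2 * (h \<bullet> h) \<le> Fobj W \<alpha> f (x + h)"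
      unfolding g_def by (rule F_taylor(2)[OF Wsym alpha f_deriv f1_deriv f2_bd])
    moreover have "0 \<le> h \<bullet> ((mat 1 - W) *v h)" by (rule Q_nonneg[OF sym rows Wnonneg])
    moreover have "- (g \<bullet> g / (2*\<alpha>*m)) \<le> g \<bullet> h + \<alpha>*m/2 * (h \<bullet> h)"
    proof -
      have "0 \<le> (h + (1/(\<alpha>*m)) *\<^sub>R g) \<bullet> (h + (1/(\<alpha>*m)) *\<^sub>R g)" by simp
      also have "\<dots> = h \<bullet> h + 2/(\<alpha>*m) * (g \<bullet> h) + (g \<bullet> g)/(\<alpha>*m)^2"
        by (simp add: inner_add_left inner_add_right inner_commute power2_eq_square)
      finally have "0 \<le> (\<alpha>*m/2) * (h \<bullet> h + 2/(\<alpha>*m) * (g \<bullet> h) + (g \<bullet> g)/(\<alpha>*m)^2)"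
        using am by simp
      also have "\<dots> = \<alpha>*m/2 * (h \<bullet> h) + g \<bullet> h + g \<bullet> g / (2*\<alpha>*m)"
        using alpha m0 by (simp add: field_simps power2_eq_square)
      finally show ?thesis by simp
    qed
    ultimately show ?thesis unfolding h_def g_def by simp
  qed
  show "Fobj W \<alpha> f x - gradF W \<alpha> f1 x \<bullet> gradF W \<alpha> f1 x / (2*\<alpha>*m) \<le> Fobj W \<alpha> f y" by (rule lb)
  have bdd: "bdd_below (range (Fobj W \<alpha> f))"
    using lb[of x] by (auto intro!: bdd_belowI)
  show "Fstar W \<alpha> f \<le> Fobj W \<alpha> f y"
    unfolding Fstar_def by (rule cINF_lower[OF bdd]) simp
  have "Fobj W \<alpha> f x - gradF W \<alpha> f1 x \<bullet> gradF W \<alpha> f1 x / (2*\<alpha>*m) \<le> Fstar W \<alpha> f"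
    unfolding Fstar_def by (rule cINF_greatest) (auto intro: lb)
  then show "Fobj W \<alpha> f x - Fstar W \<alpha> f \<le> gradF W \<alpha> f1 x \<bullet> gradF W \<alpha> f1 x / (2*\<alpha>*m)" by simp
qed

lemma Phi_vec: "Phi i *v v = (\<chi> j. if j = i then v$i else 0)"
  by (simp add: Phi_def diagm_vec vec_eq_iff)

lemma single_qf: "((\<chi> j. if j = i then - s else 0)::real^'n::finite) \<bullet> (A *v (\<chi> j. if j = i then - s else 0)) = s^2 * A$i$i"
proof -
  have "((\<chi> j. if j = i then - s else 0)::real^'n::finite) \<bullet> (A *v (\<chi> j. if j = i then - s else 0))
     = (\<Sum>a\<in>UNIV. \<Sum>b\<in>UNIV. if a = i then (if b = i then s^2 * A$i$i else 0) else 0)"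
    unfolding qf_sum
    apply (rule sum.cong[OF refl])
    apply (rule sum.cong[OF refl])
    by (auto simp: power2_eq_square)
  also have "\<dots> = (\<Sum>a\<in>UNIV. if a = i then (\<Sum>b\<in>UNIV. if b = i then s^2 * A$i$i else 0) else 0)"
    by (rule sum.cong[OF refl]) auto
  also have "\<dots> = s^2 * A$i$i" by simp
  finally show ?thesis .
qed
lemma step_bound:
  fixes W :: "real^'n::finite^'n" and x :: "real^'n"
  assumes Wsym: "transpose W = W" and alpha: "\<alpha> > 0"
    and f_deriv: "\<And>i s. (f i has_real_derivative f1 i s) (at s)"
    and f1_deriv: "\<And>i s. (f1 i has_real_derivative f2 i s) (at s)"
    and f2_bd: "\<And>i s. m \<le> f2 i s \<and> f2 i s \<le> M"
    and delta: "0 < \<delta>" "\<delta> < 1"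
    and Wdiag_bd: "\<And>i. \<delta> \<le> W $ i $ i"
  shows "Fobj W \<alpha> f (ann_step W \<alpha> f1 f2 \<epsilon> i x) \<le> Fobj W \<alpha> f x
     - \<epsilon> * (Hhat_inv W \<alpha> f2 x *v gradF W \<alpha> f1 x)$i * (gradF W \<alpha> f1 x)$i
     + \<epsilon>^2 / (2 * lambda_c \<delta> \<alpha> M) * ((Hhat_inv W \<alpha> f2 x *v gradF W \<alpha> f1 x)$i)^2"
proof -
  define g where "g = gradF W \<alpha> f1 x"
  define s where "s = \<epsilon> * (Hhat_inv W \<alpha> f2 x *v g)$i"
  define h :: "real^'n" where "h = (\<chi> j. if j = i then - s else 0)"
  have st: "ann_step W \<alpha> f1 f2 \<epsilon> i x = x + h"
    by (simp add: ann_step_def Phi_vec h_def s_def g_def vec_eq_iff)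
  have gh: "g \<bullet> h = - s * g$i" by (simp add: h_def inner_vec_def if_distrib if_distribR cong: if_cong)
  have hh: "h \<bullet> h = s^2" by (simp add: h_def inner_vec_def if_distrib if_distribR power2_eq_square cong: if_cong)
  have hQh: "h \<bullet> ((mat 1 - W) *v h) = s^2 * (1 - W$i$i)"
    unfolding h_def by (simp add: single_qf mat_def)
  have "Fobj W \<alpha> f (x + h) \<le> Fobj W \<alpha> f x + g \<bullet> h + (1/2) * (h \<bullet> ((mat 1 - W) *v h)) + \<alpha>*M/2 * (h \<bullet> h)"
    unfolding g_def by (rule F_taylor(1)[OF Wsym alpha f_deriv f1_deriv f2_bd])
  also have "\<dots> = Fobj W \<alpha> f x - s * g$i + s^2/2 * (1 - W$i$i + \<alpha>*M)"
    unfolding gh hh hQh by (simp add: algebra_simps)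
  also have "\<dots> \<le> Fobj W \<alpha> f x - s * g$i + s^2/2 * (2*(1-\<delta>) + \<alpha>*M)"
    using Wdiag_bd[of i] delta by (intro add_left_mono mult_left_mono) auto
  also have "\<dots> = Fobj W \<alpha> f x - s * g$i + s^2 / (2 * lambda_c \<delta> \<alpha> M)"
    by (simp add: lambda_c_def)
  finally have fin: "Fobj W \<alpha> f (x + h) \<le> Fobj W \<alpha> f x - s * g$i + s^2 / (2 * lambda_c \<delta> \<alpha> M)" .
  have e1: "s * g$i = \<epsilon> * (Hhat_inv W \<alpha> f2 x *v g)$i * g$i" by (simp add: s_def)
  have e2: "s^2 / (2 * lambda_c \<delta> \<alpha> M) = \<epsilon>^2 / (2 * lambda_c \<delta> \<alpha> M) * ((Hhat_inv W \<alpha> f2 x *v g)$i)^2"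
    by (simp add: s_def power_mult_distrib)
  show ?thesis unfolding st g_def[symmetric] using fin e1 e2 by linarith
qed



lemma avg_step:
  fixes W :: "real^'n::finite^'n" and x :: "real^'n"
  assumes Wsym: "transpose W = W"
    and Wnonneg: "\<And>i j. 0 \<le> W $ i $ j"
    and rows: "\<And>i. (\<Sum>j\<in>UNIV. W$i$j) = 1"
    and delta: "0 < \<delta>" "\<delta> \<le> \<Delta>" "\<Delta> < 1"
    and Wdiag_bd: "\<And>i. \<delta> \<le> W $ i $ i \<and> W $ i $ i \<le> \<Delta>"
    and alpha: "\<alpha> > 0" and mM: "0 < m" "m \<le> M"
    and f_deriv: "\<And>i s. (f i has_real_derivative f1 i s) (at s)"
    and f1_deriv: "\<And>i s. (f1 i has_real_derivative f2 i s) (at s)"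
    and f2_bd: "\<And>i s. m \<le> f2 i s \<and> f2 i s \<le> M"
    and eps: "0 < \<epsilon>" "\<epsilon> * (Lambda_c \<delta> \<Delta> \<alpha> m)\<^sup>2 \<le> 2 * (lambda_c \<delta> \<alpha> M)\<^sup>2"
  shows "(\<Sum>i\<in>UNIV. Fobj W \<alpha> f (ann_step W \<alpha> f1 f2 \<epsilon> i x) - Fstar W \<alpha> f) / real CARD('n)
     \<le> (1 - \<alpha> * m * \<epsilon> * (2 * (lambda_c \<delta> \<alpha> M)\<^sup>2 - \<epsilon> * (Lambda_c \<delta> \<Delta> \<alpha> m)\<^sup>2)
                  / (real CARD('n) * lambda_c \<delta> \<alpha> M)) * (Fobj W \<alpha> f x - Fstar W \<alpha> f)"
proof -
  define lam where "lam = lambda_c \<delta> \<alpha> M"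
  define Lam where "Lam = Lambda_c \<delta> \<Delta> \<alpha> m"
  define n where "n = real CARD('n)"
  define g where "g = gradF W \<alpha> f1 x"
  define d where "d = Hhat_inv W \<alpha> f2 x *v g"
  define Fx where "Fx = Fobj W \<alpha> f x"
  define Fs where "Fs = Fstar W \<alpha> f"
  have npos: "n > 0" by (simp add: n_def)
  have lampos: "lam > 0"
  proof -
    have "0 < 2*(1-\<delta>) + \<alpha>*M" using delta alpha mM
      by (smt (verit) mult_pos_pos)
    then show ?thesis by (simp add: lam_def lambda_c_def)
  qed
  have am: "0 < \<alpha>*m" using alpha mM by simp
  have Wd: "\<And>i. \<delta> \<le> W $ i $ i" using Wdiag_bd by blast
  have delta': "\<delta> < 1" using delta by linarith
  note SB = step_bound[OF Wsym alpha f_deriv f1_deriv f2_bd delta(1) delta' Wd, where \<epsilon>=\<epsilon> and x=x]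
  have "(\<Sum>i\<in>UNIV. Fobj W \<alpha> f (ann_step W \<alpha> f1 f2 \<epsilon> i x))
      \<le> (\<Sum>i\<in>UNIV. Fx - \<epsilon> * d$i * g$i + \<epsilon>^2 / (2 * lam) * (d$i)^2)"
    by (rule sum_mono) (use SB in \<open>simp add: Fx_def d_def g_def lam_def\<close>)
  also have "\<dots> = n * Fx - \<epsilon> * (d \<bullet> g) + \<epsilon>^2 / (2 * lam) * (d \<bullet> d)"
    by (simp add: n_def sum.distrib sum_subtractf sum_distrib_left inner_vec_def power2_eq_square mult_ac)
  finally have s1: "(\<Sum>i\<in>UNIV. Fobj W \<alpha> f (ann_step W \<alpha> f1 f2 \<epsilon> i x)) \<le> n * Fx - \<epsilon> * (d \<bullet> g) + \<epsilon>^2 / (2 * lam) * (d \<bullet> d)" .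
  note HP = hhat_props[OF Wsym Wnonneg rows delta Wdiag_bd alpha mM f2_bd]
  have dg: "lam * (g \<bullet> g) \<le> d \<bullet> g" using HP(2)[where v=g and x=x] by (simp add: d_def lam_def inner_commute)
  have dd: "d \<bullet> d \<le> Lam^2 * (g \<bullet> g)" using HP(4)[where v=g and x=x] by (simp add: d_def Lam_def)
  define kap where "kap = \<epsilon> * lam - \<epsilon>^2 / (2*lam) * Lam^2"
  have kap0: "0 \<le> kap"
  proof -
    have "\<epsilon>^2 / (2*lam) * Lam^2 = \<epsilon> * (\<epsilon> * Lam^2) / (2*lam)" by (simp add: power2_eq_square)
    also have "\<dots> \<le> \<epsilon> * (2*lam^2) / (2*lam)"
      using eps lampos by (intro divide_right_mono mult_left_mono) (auto simp: Lam_def lam_def)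
    also have "\<dots> = \<epsilon> * lam" using lampos by (simp add: power2_eq_square)
    finally show ?thesis by (simp add: kap_def)
  qed
  have s2: "(\<Sum>i\<in>UNIV. Fobj W \<alpha> f (ann_step W \<alpha> f1 f2 \<epsilon> i x)) \<le> n * Fx - kap * (g \<bullet> g)"
  proof -
    have "- \<epsilon> * (d \<bullet> g) \<le> - \<epsilon> * (lam * (g \<bullet> g))" using dg eps by simp
    moreover have "\<epsilon>^2 / (2 * lam) * (d \<bullet> d) \<le> \<epsilon>^2 / (2 * lam) * (Lam^2 * (g \<bullet> g))"
      using dd lampos by (intro mult_left_mono) auto
    ultimately show ?thesis using s1 by (simp add: kap_def algebra_simps)
  qed
  have PL: "Fx - Fs \<le> (g \<bullet> g) / (2*\<alpha>*m)"
    unfolding Fx_def Fs_def g_def by (rule F_PL(3)[OF Wsym alpha mM(1) Wnonneg rows f_deriv f1_deriv f2_bd])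
  moreover have am2: "0 < 2*\<alpha>*m" using am by simp
  ultimately have "(Fx - Fs) * (2*\<alpha>*m) \<le> g \<bullet> g" by (simp add: pos_le_divide_eq)
  then have "2*\<alpha>*m * (Fx - Fs) \<le> g \<bullet> g" by (simp add: mult_ac)
  then have "kap * (2*\<alpha>*m * (Fx - Fs)) \<le> kap * (g \<bullet> g)" using kap0 by (rule mult_left_mono)
  then have s3: "(\<Sum>i\<in>UNIV. Fobj W \<alpha> f (ann_step W \<alpha> f1 f2 \<epsilon> i x)) - n * Fs \<le> n * (Fx - Fs) - kap * 2*\<alpha>*m * (Fx - Fs)"
    using s2 by (simp add: algebra_simps)
  have beta: "\<alpha> * m * \<epsilon> * (2 * lam\<^sup>2 - \<epsilon> * Lam\<^sup>2) / (n * lam) = kap * 2 * \<alpha> * m / n"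
    using lampos npos by (simp add: kap_def field_simps power2_eq_square)
  have "(\<Sum>i\<in>UNIV. Fobj W \<alpha> f (ann_step W \<alpha> f1 f2 \<epsilon> i x) - Fs) / n
      = ((\<Sum>i\<in>UNIV. Fobj W \<alpha> f (ann_step W \<alpha> f1 f2 \<epsilon> i x)) - n * Fs) / n"
    by (simp add: sum_subtractf n_def)
  also have "\<dots> \<le> (n * (Fx - Fs) - kap * 2*\<alpha>*m * (Fx - Fs)) / n"
    using s3 npos by (intro divide_right_mono) auto
  also have "\<dots> = (1 - kap * 2 * \<alpha> * m / n) * (Fx - Fs)"
    using npos by (simp add: field_simps)
  finally show ?thesis unfolding beta[symmetric] by (simp add: Fx_def Fs_def n_def lam_def Lam_def)
qed



lemma fin_dist: "finite (set_pmf (ann_dist W \<alpha> f1 f2 \<epsilon> x0 t))"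
  by (induction t) (auto simp: set_bind_pmf)

theorem theorem4p5:
  fixes W :: "real^'n::finite^'n"
    and \<alpha> \<delta> \<Delta> m M L \<epsilon> :: real
    and f f1 f2 :: "'n \<Rightarrow> real \<Rightarrow> real"
    and x0 :: "real^'n"
  assumes n2: "CARD('n) \<ge> 2"
    and alpha: "\<alpha> > 0"
    and Wsym: "transpose W = W"
    and Wnonneg: "\<And>i j. 0 \<le> W $ i $ j"
    and Wlt1: "\<And>i j. W $ i $ j < 1"
    and Wstoch: "W *v onesv = onesv"
    and Wnull: "{x. (mat 1 - W) *v x = 0} = span {onesv}"
    and delta: "0 < \<delta>" "\<delta> \<le> \<Delta>" "\<Delta> < 1"
    and Wdiag_bd: "\<And>i. \<delta> \<le> W $ i $ i \<and> W $ i $ i \<le> \<Delta>"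
    and f_deriv: "\<And>i s. (f i has_real_derivative f1 i s) (at s)"
    and f1_deriv: "\<And>i s. (f1 i has_real_derivative f2 i s) (at s)"
    and f2_cont: "\<And>i. continuous_on UNIV (f2 i)"
    and mM: "0 < m" "m \<le> M"
    and f2_bd: "\<And>i s. m \<le> f2 i s \<and> f2 i s \<le> M"
    and f2_lip: "\<And>i a b. \<bar>f2 i a - f2 i b\<bar> \<le> L * \<bar>a - b\<bar>"
    and eps: "0 < \<epsilon>" "\<epsilon> < 1"
      "\<epsilon> < 2 * (lambda_c \<delta> \<alpha> M / Lambda_c \<delta> \<Delta> \<alpha> m)\<^sup>2"
  shows "\<forall>t. measure_pmf.expectation (ann_dist W \<alpha> f1 f2 \<epsilon> x0 t)
               (\<lambda>x. Fobj W \<alpha> f x - Fstar W \<alpha> f)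
           \<le> (1 - \<alpha> * m * \<epsilon> * (2 * (lambda_c \<delta> \<alpha> M)\<^sup>2 - \<epsilon> * (Lambda_c \<delta> \<Delta> \<alpha> m)\<^sup>2)
                  / (real CARD('n) * lambda_c \<delta> \<alpha> M)) ^ t
              * (Fobj W \<alpha> f x0 - Fstar W \<alpha> f)
         \<and> 0 < \<alpha> * m * \<epsilon> * (2 * (lambda_c \<delta> \<alpha> M)\<^sup>2 - \<epsilon> * (Lambda_c \<delta> \<Delta> \<alpha> m)\<^sup>2)
                  / (real CARD('n) * lambda_c \<delta> \<alpha> M)
         \<and> \<alpha> * m * \<epsilon> * (2 * (lambda_c \<delta> \<alpha> M)\<^sup>2 - \<epsilon> * (Lambda_c \<delta> \<Delta> \<alpha> m)\<^sup>2)
                  / (real CARD('n) * lambda_c \<delta> \<alpha> M) < 1"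
proof -
  define lam where "lam = lambda_c \<delta> \<alpha> M"
  define Lam where "Lam = Lambda_c \<delta> \<Delta> \<alpha> m"
  define n where "n = real CARD('n)"
  define \<beta> where "\<beta> = \<alpha> * m * \<epsilon> * (2 * lam\<^sup>2 - \<epsilon> * Lam\<^sup>2) / (n * lam)"
  define \<phi> where "\<phi> = (\<lambda>x. Fobj W \<alpha> f x - Fstar W \<alpha> f)"
  have rows: "\<And>i. (\<Sum>j\<in>UNIV. W$i$j) = 1"
  proof -
    fix i
    have "(W *v onesv) $ i = 1" using Wstoch by (simp add: onesv_def)
    then show "(\<Sum>j\<in>UNIV. W$i$j) = 1" by (simp add: matrix_vector_mult_def onesv_def)
  qed
  have am: "0 < \<alpha>*m" using alpha mM by simp
  have D1: "0 < 2*(1-\<delta>) + \<alpha>*M" using delta alpha mM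
    by (smt (verit) mult_pos_pos)
  have lampos: "lam > 0" using D1 by (simp add: lam_def lambda_c_def)
  have Lampos: "Lam > 0"
  proof -
    have "0 < 2*(1-\<delta>) + \<alpha>*m" using delta am by (intro add_pos_pos) auto
    then have "0 \<le> rho_c \<delta> \<alpha> m" unfolding rho_c_def using delta by simp
    moreover have "0 < 2*(1-\<Delta>) + \<alpha>*m" using delta am by (intro add_pos_pos) auto
    ultimately show ?thesis unfolding Lam_def Lambda_c_def by simp
  qed
  have npos: "n \<ge> 2" using n2 by (simp add: n_def)
  have epsL: "\<epsilon> * Lam^2 < 2 * lam^2"
  proof -
    have "\<epsilon> < 2 * lam^2 / Lam^2" using eps(3) by (simp add: lam_def Lam_def power_divide)
    then show ?thesis using Lampos by (simp add: pos_less_divide_eq)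
  qed
  have bpos: "0 < \<beta>" unfolding \<beta>_def using am eps lampos npos epsL by simp
  have aml: "\<alpha>*m*lam < 1"
  proof -
    have "\<alpha>*m \<le> \<alpha>*M" using alpha mM by simp
    moreover have "0 < 2*(1-\<delta>)" using delta by simp
    ultimately have "0 + \<alpha>*m < 2*(1-\<delta>) + \<alpha>*M" by (intro add_less_le_mono)
    then have "\<alpha>*m < 2*(1-\<delta>) + \<alpha>*M" by simp
    then show ?thesis using D1 by (simp add: lam_def lambda_c_def)
  qed
  have blt: "\<beta> < 1"
  proof -
    have "\<beta> \<le> \<alpha> * m * \<epsilon> * (2 * lam\<^sup>2) / (n * lam)"
      unfolding \<beta>_def using am eps lampos npos Lampos
      by (intro divide_right_mono mult_left_mono) auto
    also have "\<dots> = 2 * \<epsilon> * (\<alpha>*m*lam) / n" using lampos by (simp add: power2_eq_square field_simps)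
    also have "\<dots> < 2 * 1 * 1 / n"
    proof -
      have "\<epsilon> * (\<alpha>*m*lam) < 1 * 1"
        using eps aml am lampos by (intro mult_strict_mono) auto
      then show ?thesis using npos by (intro divide_strict_right_mono) auto
    qed
    also have "\<dots> \<le> 1" using npos by simp
    finally show ?thesis .
  qed
  have epsle: "\<epsilon> * (Lambda_c \<delta> \<Delta> \<alpha> m)\<^sup>2 \<le> 2 * (lambda_c \<delta> \<alpha> M)\<^sup>2"
    using epsL by (simp add: lam_def Lam_def)
  have step: "measure_pmf.expectation (map_pmf (\<lambda>i. ann_step W \<alpha> f1 f2 \<epsilon> i x) (pmf_of_set UNIV)) \<phi>
      \<le> (1 - \<beta>) * \<phi> x" for x
  proof -
    have "measure_pmf.expectation (map_pmf (\<lambda>i. ann_step W \<alpha> f1 f2 \<epsilon> i x) (pmf_of_set UNIV)) \<phi>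
        = (\<Sum>i\<in>UNIV. \<phi> (ann_step W \<alpha> f1 f2 \<epsilon> i x)) / real CARD('n)"
      by (simp add: integral_pmf_of_set)
    also have "\<dots> \<le> (1 - \<beta>) * \<phi> x"
      using avg_step[OF Wsym Wnonneg rows delta Wdiag_bd alpha mM f_deriv f1_deriv f2_bd eps(1) epsle, where x=x]
      by (simp add: \<phi>_def \<beta>_def lam_def Lam_def n_def)
    finally show ?thesis .
  qed
  have main: "measure_pmf.expectation (ann_dist W \<alpha> f1 f2 \<epsilon> x0 t) \<phi> \<le> (1 - \<beta>)^t * \<phi> x0" for t
  proof (induction t)
    case 0 then show ?case by simp
  next
    case (Suc t)
    define p where "p = ann_dist W \<alpha> f1 f2 \<epsilon> x0 t"
    define K where "K = (\<lambda>x. map_pmf (\<lambda>i. ann_step W \<alpha> f1 f2 \<epsilon> i x) (pmf_of_set (UNIV::'n set)))"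
    have finp: "finite (set_pmf p)" unfolding p_def by (rule fin_dist)
    have "measure_pmf.expectation (ann_dist W \<alpha> f1 f2 \<epsilon> x0 (Suc t)) \<phi>
        = measure_pmf.expectation (bind_pmf p K) \<phi>" by (simp add: p_def K_def)
    also have "\<dots> = (\<Sum>a\<in>set_pmf p. pmf p a *\<^sub>R measure_pmf.expectation (K a) \<phi>)"
      by (rule pmf_expectation_bind) (auto simp: finp K_def)
    also have "\<dots> \<le> (\<Sum>a\<in>set_pmf p. pmf p a * ((1 - \<beta>) * \<phi> a))"
    proof (rule sum_mono)
      fix a
      have "measure_pmf.expectation (K a) \<phi> \<le> (1 - \<beta>) * \<phi> a" unfolding K_def by (rule step)
      then show "pmf p a *\<^sub>R measure_pmf.expectation (K a) \<phi> \<le> pmf p a * ((1 - \<beta>) * \<phi> a)"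
        by (simp add: mult_left_mono)
    qed
    also have "\<dots> = (1 - \<beta>) * (\<Sum>a\<in>set_pmf p. pmf p a *\<^sub>R \<phi> a)"
      by (simp add: sum_distrib_left mult_ac)
    also have "(\<Sum>a\<in>set_pmf p. pmf p a *\<^sub>R \<phi> a) = measure_pmf.expectation p \<phi>"
      by (rule integral_measure_pmf[symmetric]) (auto simp: finp)
    also have "(1 - \<beta>) * measure_pmf.expectation p \<phi> \<le> (1 - \<beta>) * ((1 - \<beta>)^t * \<phi> x0)"
      using Suc.IH blt by (intro mult_left_mono) (auto simp: p_def)
    finally show ?case by simp
  qed
  show ?thesis using main bpos blt
    unfolding \<phi>_def \<beta>_def lam_def Lam_def n_def by blast
qed


end
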